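(* Let $k$ be a positive integer. Then: (i) for all positive divisors $l$ and $d$ of $k$, $$c(k,l,d)=c(k/d,\,k/l);$$ (ii) for every positive divisor $d$ of $k$, $$\beta_{k,d}(t)=k\,t^k\,M(1/t;\,k/d,\,k)-1;$$ (iii) for every integer $n$, $$M(t;n,k)=Z_{R(C_k)}^{\chi_n}(t,t,\dots,t).$$
   Context: Let $\epsilon_k:=e^{2\pi i/k}$ and let $(a,b)$ denote the greatest common divisor. The Ramanujan sum is $c(n,k):=\sum_{1\le m\le k,\ (m,k)=1}\epsilon_k^{mn}$ for an integer $n$ and a positive integer $k$. The $n$-necklace polynomial is $M(t;n,k):=\frac1k\sum_{d\mid k}c(n,k/d)\,t^d$. For divisors $l,d$ of $k$, set $c(k,l,d):=\sum_{1\le m\le k,\ (m,k)=l}\epsilon_d^{m}$. The Harer–Zagier polynomial is $\beta_{k,d}(t):=\sum_{r=1}^{k-1}\epsilon_d^{r}\,t^{k-(k,r)}$ for $d\mid k$ (equivalently $\sum_{l\mid k,\ l<k}c(k,l,d)t^{k-l}$). For a permutation group $H$ on a set of $v$ elements and a character $\chi$ of $H$, the generalized Redfield–Pólya cycle index is $Z_H^\chi(t_1,\dots,t_v):=\frac{1}{|H|}\sum_{h\in H}\chi(h)\prod_{j=1}^v t_j^{c_j(h)}$, where $c_j(h)$ is the number of cycles of length $j$ of $h$. For a finite group $G$, $R(G)$ denotes its image under the (left) regular representation, a permutation group on the set $G$. $C_k$ is the cyclic group of order $k$, and $\chi_n$ is the irreducible character of $C_k$ whose value on a fixed generator is $\epsilon_k^n$.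 *)

theory Defs
  imports Complex_Main "HOL-Library.FuncSet"
begin

definition eps :: "nat \<Rightarrow> complex" where
  "eps k = exp (2 * of_real pi * \<i> / of_nat k)"

definition ramanujan :: "int \<Rightarrow> nat \<Rightarrow> complex" where
  "ramanujan n k = (\<Sum>m\<in>{m. 1 \<le> m \<and> m \<le> k \<and> coprime m k}. eps k powi (int m * n))"

definition necklace :: "complex \<Rightarrow> int \<Rightarrow> nat \<Rightarrow> complex" where
  "necklace t n k = (1 / of_nat k) * (\<Sum>d\<in>{d. d dvd k}. ramanujan n (k div d) * t ^ d)"

definition csum3 :: "nat \<Rightarrow> nat \<Rightarrow> nat \<Rightarrow> complex" where
  "csum3 k l d = (\<Sum>m\<in>{m. 1 \<le> m \<and> m \<le> k \<and> gcd m k = l}. eps d ^ m)"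

definition beta :: "nat \<Rightarrow> nat \<Rightarrow> complex \<Rightarrow> complex" where
  "beta k d t = (\<Sum>r=1..k-1. eps d ^ r * t ^ (k - gcd k r))"

definition orbit_of :: "('a \<Rightarrow> 'a) \<Rightarrow> 'a \<Rightarrow> 'a set" where
  "orbit_of h x = {(h ^^ i) x | i. True}"

definition cyc_count :: "'a set \<Rightarrow> ('a \<Rightarrow> 'a) \<Rightarrow> nat \<Rightarrow> nat" where
  "cyc_count S h j = card {orbit_of h x | x. x \<in> S \<and> card (orbit_of h x) = j}"

definition cycle_index ::
  "'a set \<Rightarrow> ('a \<Rightarrow> 'a) set \<Rightarrow> (('a \<Rightarrow> 'a) \<Rightarrow> complex) \<Rightarrow> (nat \<Rightarrow> complex) \<Rightarrow> complex" where
  "cycle_index S H chi ts =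
     (1 / of_nat (card H)) *
     (\<Sum>h\<in>H. chi h * (\<Prod>j=1..card S. ts j ^ cyc_count S h j))"

text \<open>The cyclic group C_k realised as {0..<k} with addition mod k (generator 1);
  its left regular representation: m acts by x \<mapsto> (m + x) mod k.\<close>
definition cyc_mult :: "nat \<Rightarrow> nat \<Rightarrow> nat \<Rightarrow> nat" where
  "cyc_mult k m x = (m + x) mod k"

definition regular_perm :: "nat \<Rightarrow> nat \<Rightarrow> (nat \<Rightarrow> nat)" where
  "regular_perm k m = restrict (cyc_mult k m) {0..<k}"

definition regular_Ck :: "nat \<Rightarrow> (nat \<Rightarrow> nat) set" where
  "regular_Ck k = regular_perm k ` {0..<k}"

text \<open>Character chi_n of C_k: value eps_k^n on the generator 1, hence eps_k^(n m) on m.\<close>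
definition chi :: "nat \<Rightarrow> int \<Rightarrow> nat \<Rightarrow> complex" where
  "chi k n m = eps k powi (n * int m)"

text \<open>chi_n transported to R(C_k) (the regular representation is injective)\<close>
definition chi_R :: "nat \<Rightarrow> int \<Rightarrow> (nat \<Rightarrow> nat) \<Rightarrow> complex" where
  "chi_R k n h = chi k n (THE m. m < k \<and> regular_perm k m = h)"

end

theory Submission imports Defs begin

lemma gcd_reindex:
  assumes k: "k > 0" and l: "l dvd (k::nat)"
  shows "sum g {m. 1 \<le> m \<and> m \<le> k \<and> gcd m k = l}
       = sum (\<lambda>m'. g (l*m')) {m'. 1 \<le> m' \<and> m' \<le> k div l \<and> coprime m' (k div l)}"
proof -
  obtain b where kb: "k = l * b" using l by blast
  have lpos: "l > 0" using k kb by auto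
  have bk: "k div l = b" using kb lpos by simp
  show ?thesis unfolding bk
  proof (rule sum.reindex_bij_witness[of _ "\<lambda>m'. l*m'" "\<lambda>m. m div l"])
    fix m assume "m \<in> {m. 1 \<le> m \<and> m \<le> k \<and> gcd m k = l}"
    hence m: "1 \<le> m" "m \<le> k" "gcd m k = l" by auto
    have "l dvd m" using m(3) by (metis gcd_dvd1)
    then obtain a where ma: "m = l * a" by blast
    have "l * gcd a b = l" using m(3) unfolding ma kb by (simp add: gcd_mult_distrib_nat)
    hence g1: "gcd a b = 1" using lpos by simp
    have "a \<le> b" using m(2) lpos unfolding ma kb by simp
    moreover have "1 \<le> a" using m(1) ma by (cases a) auto
    ultimately show "m div l \<in> {m'. 1 \<le> m' \<and> m' \<le> b \<and> coprime m' b}"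
      using g1 lpos ma by (simp add: coprime_iff_gcd_eq_1)
    show "l * (m div l) = m" using ma lpos by simp
  next
    fix a assume "a \<in> {m'. 1 \<le> m' \<and> m' \<le> b \<and> coprime m' b}"
    hence a: "1 \<le> a" "a \<le> b" "coprime a b" by auto
    show "l * a div l = a" using lpos by simp
    have "gcd (l*a) k = l" unfolding kb using a(3)
      by (simp add: gcd_mult_distrib_nat[symmetric] coprime_iff_gcd_eq_1)
    moreover have "1 \<le> l * a" using a lpos by simp
    moreover have "l * a \<le> k" using a lpos kb by simp
    ultimately show "l * a \<in> {m. 1 \<le> m \<and> m \<le> k \<and> gcd m k = l}" by simp
  next
    fix a assume "a \<in> {m. 1 \<le> m \<and> m \<le> k \<and> gcd m k = l}"
    hence "l dvd a" by (metis (mono_tags) gcd_dvd1 mem_Collect_eq)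
    thus "g (l * (a div l)) = g a" by simp
  qed
qed

definition EE :: "real \<Rightarrow> complex" where
  "EE x = exp (2 * of_real pi * \<i> * of_real x)"

lemma eps_powi: "eps k powi z = EE (of_int z / of_nat k)"
proof -
  have "eps k powi z = exp (of_int z * (2 * of_real pi * \<i> / of_nat k))"
    unfolding eps_def by (rule exp_power_int)
  also have "\<dots> = EE (of_int z / of_nat k)"
    unfolding EE_def by (simp add: field_simps)
  finally show ?thesis .
qed

lemma eps_pow: "eps k ^ m = EE (of_nat m / of_nat k)"
  using eps_powi[of k "int m"] by simp

lemma EE_int: "EE (of_int j) = 1"
proof -
  have "EE (of_int j) = exp (2 * of_real pi * \<i>) powi j"
    unfolding EE_def by (subst exp_power_int) (simp add: field_simps)
  thus ?thesis by simp
qed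

lemma EE_add: "EE (x + y) = EE x * EE y"
  unfolding EE_def by (simp add: distrib_left exp_add)

lemma EE_add_int: "EE (x + of_int j) = EE x"
  by (simp add: EE_add EE_int)

lemma part1:
  assumes k: "k > 0" and l: "l dvd k" and d: "d dvd k"
  shows "csum3 k l d = ramanujan (int (k div d)) (k div l)"
proof -
  have lpos: "l > 0" and dpos: "d > 0" using k l d by (auto intro: ccontr)
  have "csum3 k l d = (\<Sum>m'\<in>{m'. 1 \<le> m' \<and> m' \<le> k div l \<and> coprime m' (k div l)}. eps d ^ (l*m'))"
    unfolding csum3_def by (rule gcd_reindex[OF k l])
  also have "\<dots> = ramanujan (int (k div d)) (k div l)"
    unfolding ramanujan_def
  proof (rule sum.cong[OF refl])
    fix m' :: nat
    have r1: "real (k div d) = real k / real d" using d by (simp add: real_of_nat_div)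
    have r2: "real (k div l) = real k / real l" using l by (simp add: real_of_nat_div)
    have "real (l * m') / real d = real m' * real (k div d) / real (k div l)"
      unfolding r1 r2 using k lpos dpos by (simp add: field_simps)
    thus "eps d ^ (l * m') = eps (k div l) powi (int m' * int (k div d))"
      unfolding eps_pow eps_powi by simp
  qed
  finally show ?thesis .
qed

lemma eps_dvd_pow: "d dvd k \<Longrightarrow> d > 0 \<Longrightarrow> eps d ^ k = 1"
proof -
  assume "d dvd k" "d > 0"
  then obtain c where "k = d * c" by blast
  hence "real k / real d = real_of_int (int c)" using \<open>d > 0\<close> by simp
  thus ?thesis unfolding eps_pow using EE_int[of "int c"] by simp
qed

lemma part2:
  assumes k: "k > 0" and d: "d dvd k" and t: "t \<noteq> 0"
  shows "beta k d t = of_nat k * t ^ k * necklace (1 / t) (int (k div d)) k - 1"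
proof -
  have dpos: "d > 0" using k d by (auto intro: ccontr)
  have fin: "finite {e. e dvd k}" using k by simp
  have "of_nat k * t ^ k * necklace (1 / t) (int (k div d)) k
      = (\<Sum>e\<in>{e. e dvd k}. t ^ k * (ramanujan (int (k div d)) (k div e) * (1/t) ^ e))"
    unfolding necklace_def using k by (simp add: sum_distrib_left mult.assoc)
  also have "\<dots> = (\<Sum>e\<in>{e. e dvd k}. csum3 k e d * t ^ (k - e))"
  proof (rule sum.cong[OF refl])
    fix e assume "e \<in> {e. e dvd k}"
    hence e: "e dvd k" by simp
    have "e \<le> k" using e k by (simp add: dvd_imp_le)
    hence "t ^ k = t ^ (k - e) * t ^ e" by (simp add: power_add[symmetric])
    hence "t ^ k * (1/t) ^ e = t ^ (k - e)" using t by (simp add: power_one_over field_simps)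
    thus "t ^ k * (ramanujan (int (k div d)) (k div e) * (1/t) ^ e) = csum3 k e d * t ^ (k - e)"
      using part1[OF k e d] by (simp add: mult_ac)
  qed
  also have "\<dots> = (\<Sum>e\<in>{e. e dvd k}. \<Sum>m\<in>{m. m \<in> {1..k} \<and> gcd m k = e}. eps d ^ m * t ^ (k - gcd m k))"
    unfolding csum3_def sum_distrib_right
    by (intro sum.cong) auto
  also have "\<dots> = (\<Sum>m\<in>{1..k}. eps d ^ m * t ^ (k - gcd m k))"
    by (rule sum.group) (use fin in auto)
  also have "\<dots> = beta k d t + 1"
  proof -
    have "{1..k} = insert k {1..k-1}" using k by auto
    hence "(\<Sum>m\<in>{1..k}. eps d ^ m * t ^ (k - gcd m k)) = eps d ^ k * t ^ (k - gcd k k) + beta k d t"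
      unfolding beta_def using k by (simp add: gcd.commute)
    thus ?thesis using eps_dvd_pow[OF d dpos] by simp
  qed
  finally show ?thesis by simp
qed


lemma iter_perm:
  assumes k: "k > 0" and x: "x < k"
  shows "(regular_perm k m ^^ i) x = (x + i*m) mod k"
proof (induction i)
  case 0 thus ?case using x by simp
next
  case (Suc i)
  have "(x + i*m) mod k < k" using k by simp
  have "(regular_perm k m ^^ Suc i) x = regular_perm k m ((x + i*m) mod k)"
    using Suc.IH by simp
  also have "\<dots> = (m + (x + i*m) mod k) mod k"
    using \<open>(x + i*m) mod k < k\<close> by (simp add: regular_perm_def cyc_mult_def)
  also have "\<dots> = (x + Suc i * m) mod k" by (simp add: mod_add_right_eq add_ac)
  finally show ?case .
qed

lemma orbit_eq:
  assumes k: "k > 0" and x: "x < k" and m: "m < k"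
  shows "orbit_of (regular_perm k m) x = {y. y < k \<and> y mod gcd m k = x mod gcd m k}"
proof -
  let ?g = "gcd m k"
  have gk: "?g dvd k" and gm: "?g dvd m" by auto
  show ?thesis
  proof (intro equalityI subsetI)
    fix y assume "y \<in> orbit_of (regular_perm k m) x"
    then obtain i where y: "y = (x + i*m) mod k" unfolding orbit_of_def iter_perm[OF k x] by auto
    have "y mod ?g = (x + i*m) mod ?g" unfolding y using gk by (simp add: mod_mod_cancel)
    also have "\<dots> = x mod ?g" using gm by (simp add: mod_add_right_eq[symmetric])
    finally show "y \<in> {y. y < k \<and> y mod ?g = x mod ?g}" using y k by simp
  next
    fix y assume "y \<in> {y. y < k \<and> y mod ?g = x mod ?g}"
    hence y: "y < k" "y mod ?g = x mod ?g" by auto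
    show "y \<in> orbit_of (regular_perm k m) x"
    proof (cases "m = 0")
      case True
      hence "?g = k" by simp
      hence "y = x" using y x by simp
      thus ?thesis unfolding orbit_of_def by (auto intro: exI[of _ 0])
    next
      case False
      obtain a b where ab: "m * a = k * b + ?g" using bezout_nat[OF False, of k] by blast
      have "(y + k) mod ?g = x mod ?g" using y(2) gk by (simp add: mod_add_right_eq[symmetric])
      hence "?g dvd (y + k - x)" using x by (subst mod_eq_dvd_iff_nat[symmetric]) auto
      then obtain c where c: "y + k - x = ?g * c" by blast
      have "x + (c*a) * m = y + k + (c*b) * k"
      proof -
        have "x + (c*a) * m = x + c * (m * a)" by (simp add: mult_ac)
        also have "\<dots> = x + c * ?g + (c*b) * k" unfolding ab by (simp add: algebra_simps)
        also have "\<dots> = y + k + (c*b)*k" using c x by (simp add: mult.commute)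
        finally show ?thesis .
      qed
      hence "(x + (c*a) * m) mod k = y" using y(1) by simp
      thus ?thesis unfolding orbit_of_def iter_perm[OF k x] by blast
    qed
  qed
qed

lemma card_class:
  assumes g: "g > 0" "g dvd (k::nat)" and r: "r < g"
  shows "card {y. y < k \<and> y mod g = r} = k div g"
proof -
  obtain b where kb: "k = g * b" using g by blast
  have "{y. y < k \<and> y mod g = r} = (\<lambda>q. r + q*g) ` {0..<b}"
  proof (intro equalityI subsetI)
    fix y assume "y \<in> {y. y < k \<and> y mod g = r}"
    hence y: "y < k" "y mod g = r" by auto
    have "y = r + (y div g) * g" using div_mult_mod_eq[of y g] y(2) by simp
    moreover have "y div g < b" using y(1) kb g by (simp add: div_less_iff_less_mult mult.commute)
    ultimately show "y \<in> (\<lambda>q. r + q*g) ` {0..<b}" by force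
  next
    fix y assume "y \<in> (\<lambda>q. r + q*g) ` {0..<b}"
    then obtain q where q: "q < b" "y = r + q*g" by auto
    have "r + q*g < g + q*g" using r by simp
    also have "\<dots> = (q+1)*g" by simp
    also have "\<dots> \<le> b*g" using q(1) by (intro mult_right_mono) auto
    finally have "y < k" using q kb by (simp add: mult.commute)
    moreover have "y mod g = r" using q r by simp
    ultimately show "y \<in> {y. y < k \<and> y mod g = r}" by simp
  qed
  moreover have "inj_on (\<lambda>q. r + q*g) {0..<b}" using g by (auto simp: inj_on_def)
  ultimately show ?thesis using kb g by (simp add: card_image)
qed

lemma cyc_count_eq:
  assumes k: "k > 0" and m: "m < k"
  shows "cyc_count {0..<k} (regular_perm k m) j = (if j = k div gcd m k then gcd m k else 0)"
proof -
  let ?g = "gcd m k"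
  let ?C = "\<lambda>r. {y. y < k \<and> y mod ?g = r}"
  have gpos: "?g > 0" using k by simp
  have gk: "?g dvd k" by simp
  have gle: "?g \<le> k" using k by (simp add: dvd_imp_le)
  have orb: "orbit_of (regular_perm k m) x = ?C (x mod ?g)" if "x < k" for x
    using orbit_eq[OF k that m] by simp
  have cardC: "card (?C (x mod ?g)) = k div ?g" for x
    using card_class[OF gpos gk] gpos by simp
  have S: "{orbit_of (regular_perm k m) x | x. x \<in> {0..<k} \<and> card (orbit_of (regular_perm k m) x) = j}
      = (if j = k div ?g then ?C ` {0..<?g} else {})"
  proof (cases "j = k div ?g")
    case True
    have "{orbit_of (regular_perm k m) x | x. x \<in> {0..<k} \<and> card (orbit_of (regular_perm k m) x) = j}
        = ?C ` {0..<?g}"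
    proof (intro equalityI subsetI)
      fix A assume "A \<in> {orbit_of (regular_perm k m) x | x. x \<in> {0..<k} \<and> card (orbit_of (regular_perm k m) x) = j}"
      then obtain x where "x < k" "A = orbit_of (regular_perm k m) x" by auto
      hence "A = ?C (x mod ?g)" using orb by simp
      moreover have "x mod ?g < ?g" using gpos by simp
      ultimately show "A \<in> ?C ` {0..<?g}" by auto
    next
      fix A assume "A \<in> ?C ` {0..<?g}"
      then obtain r where r: "r < ?g" "A = ?C r" by auto
      have rk: "r < k" using r gle by simp
      have "A = orbit_of (regular_perm k m) r" using orb[OF rk] r by simp
      moreover have "card (orbit_of (regular_perm k m) r) = j"
        using orb[OF rk] cardC[of r] True by simp
      ultimately show "A \<in> {orbit_of (regular_perm k m) x | x. x \<in> {0..<k} \<and> card (orbit_of (regular_perm k m) x) = j}"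
        using rk by auto
    qed
    thus ?thesis using True by simp
  next
    case False
    thus ?thesis using orb cardC by auto
  qed
  have inj: "inj_on ?C {0..<?g}"
  proof (rule inj_onI)
    fix r s assume rs: "r \<in> {0..<?g}" "s \<in> {0..<?g}" "?C r = ?C s"
    have rm: "r mod ?g = r" using rs by simp
    have "r < k" using rs(1) gle by simp
    hence "r \<in> ?C r" using rm by simp
    hence "r \<in> ?C s" using rs by simp
    thus "r = s" using rm by simp
  qed
  show ?thesis unfolding cyc_count_def S using inj by (simp add: card_image)
qed

lemma prod_cyc:
  assumes k: "k > 0" and m: "m < k"
  shows "(\<Prod>j=Suc 0..k. t ^ cyc_count {0..<k} (regular_perm k m) j) = t ^ gcd m k"
proof -
  let ?g = "gcd m k"
  have gpos: "?g > 0" using k by simp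
  have gle: "?g \<le> k" using k by (simp add: dvd_imp_le)
  have "k div ?g > 0" using gle gpos by (simp add: div_greater_zero_iff)
  hence "k div ?g \<ge> 1" by simp
  moreover have "k div ?g \<le> k" by simp
  ultimately have mem: "k div ?g \<in> {1..k}" by simp
  have "(\<Prod>j=Suc 0..k. t ^ cyc_count {0..<k} (regular_perm k m) j)
      = (\<Prod>j\<in>{1..k}. if j = k div ?g then t ^ ?g else 1)"
    by (intro prod.cong) (auto simp: cyc_count_eq[OF k m])
  also have "\<dots> = t ^ ?g" using mem by (simp add: prod.delta)
  finally show ?thesis .
qed


lemma part3:
  assumes k: "k > 0"
  shows "necklace t n k = cycle_index {0..<k} (regular_Ck k) (chi_R k n) (\<lambda>_. t)"
proof -
  have inj: "inj_on (regular_perm k) {0..<k}"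
  proof (rule inj_onI)
    fix a b assume ab: "a \<in> {0..<k}" "b \<in> {0..<k}" "regular_perm k a = regular_perm k b"
    have "regular_perm k a 0 = a" "regular_perm k b 0 = b"
      using ab(1,2) k by (auto simp: regular_perm_def cyc_mult_def)
    thus "a = b" using ab(3) by metis
  qed
  have cardH: "card (regular_Ck k) = k" unfolding regular_Ck_def using inj by (simp add: card_image)
  have chiR: "chi_R k n (regular_perm k m) = chi k n m" if "m < k" for m
  proof -
    have "(THE m'. m' < k \<and> regular_perm k m' = regular_perm k m) = m"
    proof (rule the_equality)
      show "m < k \<and> regular_perm k m = regular_perm k m" using that by simp
    next
      fix m' assume "m' < k \<and> regular_perm k m' = regular_perm k m"
      thus "m' = m" using inj_onD[OF inj, of m' m] that by simp
    qed
    thus ?thesis unfolding chi_R_def by simp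
  qed
  let ?F = "\<lambda>m::nat. eps k powi (int m * n) * t ^ gcd m k"
  have "cycle_index {0..<k} (regular_Ck k) (chi_R k n) (\<lambda>_. t)
      = (1 / of_nat k) * (\<Sum>m\<in>{0..<k}. ?F m)"
    unfolding cycle_index_def cardH unfolding regular_Ck_def sum.reindex[OF inj] comp_def
    by (intro arg_cong2[where f="(*)"] refl sum.cong) (simp_all add: chiR prod_cyc[OF k] chi_def mult_ac)
  also have "(\<Sum>m\<in>{0..<k}. ?F m) = (\<Sum>m\<in>{1..k}. ?F m)"
  proof -
    have "?F k = ?F 0"
    proof -
      have "eps k powi (int k * n) = 1"
        unfolding eps_powi using k EE_int[of n] by simp
      thus ?thesis by simp
    qed
    moreover have "{0..<k} = insert 0 {1..<k}" "{1..k} = insert k {1..<k}" using k by auto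
    ultimately show ?thesis by simp
  qed
  also have "\<dots> = (\<Sum>e\<in>{e. e dvd k}. \<Sum>m\<in>{m. m \<in> {1..k} \<and> gcd m k = e}. ?F m)"
    by (rule sum.group[symmetric]) (use k in auto)
  also have "\<dots> = (\<Sum>e\<in>{e. e dvd k}. ramanujan n (k div e) * t ^ e)"
  proof (rule sum.cong[OF refl])
    fix e assume "e \<in> {e. e dvd k}"
    hence e: "e dvd k" by simp
    have epos: "e > 0" using e k by (auto intro: ccontr)
    have "(\<Sum>m\<in>{m. m \<in> {1..k} \<and> gcd m k = e}. ?F m)
        = (\<Sum>m\<in>{m. 1 \<le> m \<and> m \<le> k \<and> gcd m k = e}. eps k powi (int m * n)) * t ^ e"
      by (simp add: sum_distrib_right)
    also have "(\<Sum>m\<in>{m. 1 \<le> m \<and> m \<le> k \<and> gcd m k = e}. eps k powi (int m * n))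
        = (\<Sum>m'\<in>{m'. 1 \<le> m' \<and> m' \<le> k div e \<and> coprime m' (k div e)}. eps k powi (int (e*m') * n))"
      by (rule gcd_reindex[OF k e])
    also have "\<dots> = ramanujan n (k div e)"
      unfolding ramanujan_def
    proof (rule sum.cong[OF refl])
      fix m' :: nat
      have r2: "real (k div e) = real k / real e" using e by (simp add: real_of_nat_div)
      have "real_of_int (int (e*m') * n) / real k = real_of_int (int m' * n) / real (k div e)"
        unfolding r2 using k epos by (simp add: field_simps)
      thus "eps k powi (int (e*m') * n) = eps (k div e) powi (int m' * n)"
        unfolding eps_powi by simp
    qed
    finally show "(\<Sum>m\<in>{m. m \<in> {1..k} \<and> gcd m k = e}. ?F m) = ramanujan n (k div e) * t ^ e" .
  qed
  finally show ?thesis unfolding necklace_def by simp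
qed

theorem proposition1:
  fixes k :: nat
  assumes "k > 0"
  shows "(\<forall>l d. l dvd k \<and> d dvd k \<longrightarrow> csum3 k l d = ramanujan (int (k div d)) (k div l))
       \<and> (\<forall>d t. d dvd k \<and> t \<noteq> 0 \<longrightarrow>
            beta k d t = of_nat k * t ^ k * necklace (1 / t) (int (k div d)) k - 1)
       \<and> (\<forall>(n::int) t. necklace t n k =
            cycle_index {0..<k} (regular_Ck k) (chi_R k n) (\<lambda>_. t))"
  using part1[OF assms] part2[OF assms] part3[OF assms] by blast

end
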